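(* Let $n\in\mathbb{N}$ and $i\in\mathbb{N}$ with $2\le i\le2^n$. Then there exists a maximal lattice-free polyhedron in $\mathbb{R}^n$ with exactly $i$ facets.
   Context: A set $B\subseteq\mathbb{R}^n$ is lattice-free if it is an $n$-dimensional closed convex set with $\operatorname{int}(B)\cap\mathbb{Z}^n=\emptyset$; it is maximal lattice-free if it is not a proper subset of another lattice-free set. *)

theory Defs
  imports "HOL-Analysis.Analysis"
begin

definition integer_points :: "(real ^ 'n) set" where
  "integer_points = {x. \<forall>k. x $ k \<in> \<int>}"

definition lattice_free :: "(real ^ 'n) set \<Rightarrow> bool" where
  "lattice_free B \<longleftrightarrow> convex B \<and> closed B \<and> aff_dim B = int CARD('n) \<and>
     interior B \<inter> integer_points = {}"

definition maximal_lattice_free :: "(real ^ 'n) set \<Rightarrow> bool" where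
  "maximal_lattice_free B \<longleftrightarrow> lattice_free B \<and>
     (\<forall>B'. lattice_free B' \<and> B \<subseteq> B' \<longrightarrow> B' = B)"

end

theory Submission
  imports Defs
begin


lemma ev_strict:
  fixes a :: "'c \<Rightarrow> real ^ 'n"
  assumes "finite C'" "\<forall>d\<in>C'. a d \<bullet> z < b d"
  shows "\<forall>\<^sub>F s in at_right 0. \<forall>d\<in>C'. a d \<bullet> (z + s *\<^sub>R v) < b d"
proof (rule eventually_ball_finite[OF assms(1)], intro ballI)
  fix d assume d: "d \<in> C'"
  have "((\<lambda>s::real. a d \<bullet> (z + s *\<^sub>R v)) \<longlongrightarrow> a d \<bullet> (z + 0 *\<^sub>R v)) (at_right 0)"
    by (intro tendsto_intros)
  then have "((\<lambda>s::real. a d \<bullet> (z + s *\<^sub>R v)) \<longlongrightarrow> a d \<bullet> z) (at_right 0)" by simp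
  then show "\<forall>\<^sub>F s in at_right 0. a d \<bullet> (z + s *\<^sub>R v) < b d"
    using order_tendstoD(2) assms(2) d by blast
qed

lemma ev_pos: "\<forall>\<^sub>F s in at_right (0::real). P s \<Longrightarrow> \<exists>s>0. P s"
  unfolding eventually_at_right_field
  by (metis field_lbound_gt_zero less_eq_real_def)

lemma gen_main:
  fixes a :: "'c \<Rightarrow> real ^ 'n" and b :: "'c \<Rightarrow> real"
  assumes fin: "finite C"
    and W1: "\<And>c. c \<in> C \<Longrightarrow> a c \<bullet> z c = b c"
    and W2: "\<And>c d. c \<in> C \<Longrightarrow> d \<in> C \<Longrightarrow> d \<noteq> c \<Longrightarrow> a d \<bullet> z c < b d"
    and Zi: "\<And>c. c \<in> C \<Longrightarrow> z c \<in> integer_points"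
    and I: "\<And>c. c \<in> C \<Longrightarrow> a c \<bullet> p < b c"
    and L: "\<And>x. x \<in> integer_points \<Longrightarrow> \<exists>c\<in>C. a c \<bullet> x \<ge> b c"
  shows "\<exists>P :: (real ^ 'n) set. polyhedron P \<and> maximal_lattice_free P \<and>
           finite {F. F facet_of P} \<and> card {F. F facet_of P} = card C"
proof -
  define H where "H c = {x. a c \<bullet> x \<le> b c}" for c
  define P where "P = \<Inter>(H ` C)"
  define Op where "Op = {x. \<forall>c\<in>C. a c \<bullet> x < b c}"
  have Pdef: "P = {x. \<forall>c\<in>C. a c \<bullet> x \<le> b c}" unfolding P_def H_def by auto
  have anz: "a c \<noteq> 0" if "c \<in> C" for c using W1[OF that] I[OF that] by auto
  have polyP: "polyhedron P" unfolding P_def H_def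
    using fin by (auto intro!: polyhedron_Inter polyhedron_halfspace_le)
  have openOp: "open Op"
  proof -
    have "Op = \<Inter>((\<lambda>c. {x. a c \<bullet> x < b c}) ` C)" unfolding Op_def by auto
    then show ?thesis using fin by (auto intro!: open_Inter open_halfspace_lt)
  qed
  have OpP: "Op \<subseteq> P" unfolding Op_def Pdef by auto
  have OpintP: "Op \<subseteq> interior P" using openOp OpP interior_maximal by blast
  have push: "\<exists>w. a c \<bullet> w > b c \<and> (\<forall>d\<in>C. d \<noteq> c \<longrightarrow> a d \<bullet> w < b d)" if c: "c \<in> C" for c
  proof -
    have e: "\<forall>\<^sub>F s in at_right 0. \<forall>d\<in>C-{c}. a d \<bullet> (z c + s *\<^sub>R a c) < b d"
      using ev_strict[of "C-{c}" a "z c" b] fin W2[OF c] by auto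
    obtain s where s: "s > 0" "\<forall>d\<in>C-{c}. a d \<bullet> (z c + s *\<^sub>R a c) < b d"
      using ev_pos[OF e] by blast
    have "a c \<bullet> (z c + s *\<^sub>R a c) = b c + s * (a c \<bullet> a c)"
      using W1[OF c] by (simp add: inner_add_right)
    moreover have "a c \<bullet> a c > 0" using anz[OF c] by simp
    ultimately have "a c \<bullet> (z c + s *\<^sub>R a c) > b c" using s(1) by simp
    then show ?thesis using s by blast
  qed
  have intP: "interior P = Op"
  proof
    show "Op \<subseteq> interior P" by (rule OpintP)
    show "interior P \<subseteq> Op"
    proof
      fix x assume x: "x \<in> interior P"
      show "x \<in> Op" unfolding Op_def mem_Collect_eq
      proof (rule ccontr)
        assume "\<not> (\<forall>c\<in>C. a c \<bullet> x < b c)"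
        then obtain c where c: "c \<in> C" "a c \<bullet> x \<ge> b c" by auto
        obtain e where e: "e > 0" "ball x e \<subseteq> P" using x by (meson mem_interior)
        define t where "t = e / (2 * norm (a c))"
        have nc: "norm (a c) > 0" using anz[OF c(1)] by simp
        have t: "t > 0" unfolding t_def using e nc by simp
        have "dist x (x + t *\<^sub>R a c) = t * norm (a c)" using t by (simp add: dist_norm)
        also have "\<dots> = e / 2" unfolding t_def using nc by simp
        finally have "x + t *\<^sub>R a c \<in> ball x e" using e by simp
        then have "x + t *\<^sub>R a c \<in> P" using e by blast
        then have "a c \<bullet> (x + t *\<^sub>R a c) \<le> b c" using c unfolding Pdef by auto
        moreover have "a c \<bullet> (x + t *\<^sub>R a c) = a c \<bullet> x + t * (a c \<bullet> a c)"
          by (simp add: inner_add_right)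
        moreover have "a c \<bullet> a c > 0" using anz[OF c(1)] by simp
        moreover have "t * (a c \<bullet> a c) > 0" using t \<open>a c \<bullet> a c > 0\<close> by (rule mult_pos_pos)
        ultimately show False using c by linarith
      qed
    qed
  qed
  have pOp: "p \<in> Op" unfolding Op_def using I by auto
  have inne: "interior P \<noteq> {}" using pOp intP by auto
  have lf: "lattice_free P"
    unfolding lattice_free_def
  proof (intro conjI)
    show "convex P" unfolding P_def H_def by (auto intro!: convex_Inter convex_halfspace_le)
    show "closed P" unfolding P_def H_def by (auto intro!: closed_Inter closed_halfspace_le)
    show "aff_dim P = int CARD('n)" using aff_dim_nonempty_interior[OF inne] by simp
    show "interior P \<inter> integer_points = {}"
      using L unfolding intP Op_def by force
  qed
  have mlf: "maximal_lattice_free P"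
    unfolding maximal_lattice_free_def
  proof (intro conjI allI impI lf)
    fix B' assume B': "lattice_free B' \<and> P \<subseteq> B'"
    have cB: "convex B'" and iB: "interior B' \<inter> integer_points = {}"
      using B' unfolding lattice_free_def by auto
    show "B' = P"
    proof (rule ccontr)
      assume "B' \<noteq> P"
      then obtain y where y: "y \<in> B'" "y \<notin> P" using B' by blast
      then obtain c where c: "c \<in> C" "a c \<bullet> y > b c" unfolding Pdef by force
      define v where "v = z c - y"
      have e: "\<forall>\<^sub>F s in at_right 0. \<forall>d\<in>C-{c}. a d \<bullet> (z c + s *\<^sub>R v) < b d"
        using ev_strict[of "C-{c}" a "z c" b] fin W2[OF c(1)] by auto
      obtain s where s: "s > 0" "\<forall>d\<in>C-{c}. a d \<bullet> (z c + s *\<^sub>R v) < b d"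
        using ev_pos[OF e] by blast
      define q where "q = z c + s *\<^sub>R v"
      have "a c \<bullet> q = b c - s * (a c \<bullet> y - b c)"
        unfolding q_def v_def using W1[OF c(1)] by (simp add: inner_add_right inner_diff_right algebra_simps)
      then have "a c \<bullet> q < b c" using s(1) c(2) by simp
      then have "q \<in> Op" unfolding Op_def using s(2) q_def by auto
      then have qi: "q \<in> interior B'" using OpintP B' interior_mono by blast
      have "open_segment q y \<subseteq> interior B'"
        using in_interior_closure_convex_segment[OF cB qi] y closure_subset by blast
      moreover have "z c \<in> open_segment q y"
        unfolding in_segment
      proof (intro conjI exI)
        show "q \<noteq> y" using \<open>a c \<bullet> q < b c\<close> c(2) by auto
        show "0 < s / (1 + s)" "s / (1 + s) < 1" using s(1) by auto
        have "(1 + s) *\<^sub>R z c = q + s *\<^sub>R y" unfolding q_def v_def by (simp add: algebra_simps)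
        have u: "1 - s / (1 + s) = 1 / (1 + s)" using s(1) by (simp add: field_simps)
        have "(1 - s / (1 + s)) *\<^sub>R q + (s / (1 + s)) *\<^sub>R y = (1 / (1 + s)) *\<^sub>R (q + s *\<^sub>R y)"
          unfolding u by (simp add: scaleR_add_right)
        also have "\<dots> = (1 / (1 + s)) *\<^sub>R ((1 + s) *\<^sub>R z c)" using \<open>(1 + s) *\<^sub>R z c = q + s *\<^sub>R y\<close> by simp
        also have "\<dots> = z c" using s(1) by simp
        finally show "z c = (1 - s / (1 + s)) *\<^sub>R q + (s / (1 + s)) *\<^sub>R y" by simp
      qed
      ultimately show False using iB Zi[OF c(1)] by blast
    qed
  qed
  have injH: "inj_on H C"
  proof (rule inj_onI)
    fix c d assume cd: "c \<in> C" "d \<in> C" "H c = H d"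
    show "c = d"
    proof (rule ccontr)
      assume ne: "c \<noteq> d"
      obtain w where w: "a c \<bullet> w > b c" "\<forall>d\<in>C. d \<noteq> c \<longrightarrow> a d \<bullet> w < b d" using push[OF cd(1)] by blast
      have "w \<in> H d" using w(2) cd(2) ne unfolding H_def by auto
      moreover have "w \<notin> H c" using w(1) unfolding H_def by auto
      ultimately show False using cd(3) by simp
    qed
  qed
  define ci where "ci h = inv_into C H h" for h
  have affP: "affine hull P = UNIV" using affine_hull_nonempty_interior[OF inne] .
  have facet_iff: "Q facet_of P \<longleftrightarrow> (\<exists>h. h \<in> H ` C \<and> Q = P \<inter> {x. a (ci h) \<bullet> x = b (ci h)})" for Q
  proof (rule facet_of_polyhedron_explicit)
    show "finite (H ` C)" using fin by simp
    show "P = affine hull P \<inter> \<Inter> (H ` C)" unfolding affP by (simp add: P_def)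
    show "a (ci h) \<noteq> 0 \<and> h = {x. a (ci h) \<bullet> x \<le> b (ci h)}" if "h \<in> H ` C" for h
    proof -
      have "ci h \<in> C" unfolding ci_def using that by (simp add: inv_into_into)
      moreover have "H (ci h) = h" unfolding ci_def using that by (simp add: f_inv_into_f)
      ultimately show ?thesis using anz unfolding H_def by auto
    qed
    show "P \<subset> affine hull P \<inter> \<Inter> F'" if F': "F' \<subset> H ` C" for F'
    proof -
      obtain c where c: "c \<in> C" "H c \<notin> F'" using F' by blast
      obtain w where w: "a c \<bullet> w > b c" "\<forall>d\<in>C. d \<noteq> c \<longrightarrow> a d \<bullet> w < b d" using push[OF c(1)] by blast
      have "w \<in> \<Inter> F'"
      proof
        fix h assume h: "h \<in> F'"
        then obtain d where d: "d \<in> C" "h = H d" using F' by blast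
        then have "d \<noteq> c" using c h by auto
        then show "w \<in> h" using w(2) d unfolding H_def by auto
      qed
      moreover have "w \<notin> P" using w(1) c(1) unfolding Pdef by force
      moreover have "P \<subseteq> \<Inter> F'" using F' unfolding P_def by blast
      ultimately show ?thesis unfolding affP by blast
    qed
  qed
  define fc where "fc c = P \<inter> {x. a c \<bullet> x = b c}" for c
  have facets: "{Q. Q facet_of P} = fc ` C"
  proof -
    have "ci (H c) = c" if "c \<in> C" for c unfolding ci_def using injH that by simp
    then show ?thesis unfolding facet_iff fc_def by auto
  qed
  have zP: "z c \<in> P" if "c \<in> C" for c
    unfolding Pdef using W1 W2 that by (auto intro: less_imp_le) (metis W1 W2 order.order_iff_strict)
  have injfc: "inj_on fc C"
  proof (rule inj_onI)
    fix c d assume cd: "c \<in> C" "d \<in> C" "fc c = fc d"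
    have "z c \<in> fc c" unfolding fc_def using zP[OF cd(1)] W1[OF cd(1)] by simp
    then have "z c \<in> fc d" using cd by simp
    then have "a d \<bullet> z c = b d" unfolding fc_def by simp
    then show "c = d" using W2[OF cd(1) cd(2)] by fastforce
  qed
  show ?thesis
    apply (rule exI[of _ P])
    using polyP mlf fin injfc unfolding facets by (simp add: card_image)
qed


definition Av :: "'n set \<Rightarrow> 'n set \<Rightarrow> real ^ ('n::finite)" where
  "Av T U = (\<chi> k. if k \<in> T then 1 else if k \<in> U then -1 else 0)"
definition Zv :: "'n set \<Rightarrow> real ^ ('n::finite)" where
  "Zv T = (\<chi> k. if k \<in> T then 1 else 0)"

lemma inner_Av:
  fixes x :: "real ^ ('n::finite)"
  assumes "T \<inter> U = {}"
  shows "Av T U \<bullet> x = (\<Sum>k\<in>T. x $ k) - (\<Sum>k\<in>U. x $ k)"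
proof -
  have "Av T U \<bullet> x = (\<Sum>k\<in>UNIV. (if k \<in> T then x $ k else 0) - (if k \<in> U then x $ k else 0))"
    unfolding inner_vec_def Av_def using assms by (intro sum.cong) auto
  also have "\<dots> = (\<Sum>k\<in>T. x $ k) - (\<Sum>k\<in>U. x $ k)"
    by (simp add: sum_subtractf sum.If_cases)
  finally show ?thesis .
qed

lemma sum_Zv: "(\<Sum>k\<in>A. Zv T $ k) = real (card (A \<inter> T))"
  unfolding Zv_def by (simp add: sum.If_cases)

lemma Zv_int: "Zv T \<in> integer_points"
  unfolding Zv_def integer_points_def by auto

lemma int_le0:
  assumes "(r::real) \<in> \<int>" "\<not> r \<ge> 1" shows "r \<le> 0"
proof -
  obtain n where n: "r = of_int n" using assms(1) by (auto elim: Ints_cases)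
  then have "n < 1" using assms(2) by simp
  then show ?thesis using n by simp
qed

definition CC :: "'n set \<Rightarrow> 'n \<Rightarrow> 'n set set \<Rightarrow> ('n set \<times> 'n set) set" where
  "CC S m D = (\<lambda>T. (T, S - T)) ` (Pow S - D) \<union> (\<lambda>T. (insert m T, S - T)) ` D
      \<union> (\<lambda>T. (T, insert m (S - T))) ` D"

lemma CC_disj: "m \<notin> S \<Longrightarrow> D \<subseteq> Pow S \<Longrightarrow> (T, U) \<in> CC S m D \<Longrightarrow> T \<inter> U = {}"
  unfolding CC_def by auto

lemma CC_ne: "m \<notin> S \<Longrightarrow> D \<subseteq> Pow S \<Longrightarrow> D \<noteq> {} \<Longrightarrow> (T, U) \<in> CC S m D \<Longrightarrow> T \<union> U \<noteq> {}"
  unfolding CC_def by auto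

lemma CC_struct:
  assumes "m \<notin> S" "D \<subseteq> Pow S" "(T, U) \<in> CC S m D" "(T', U') \<in> CC S m D"
    "T' \<subseteq> T" "U' \<inter> T = {}"
  shows "(T, U) = (T', U')"
proof -
  have rep: "\<exists>T0. T0 \<subseteq> S \<and> T \<inter> S = T0 \<and> U \<inter> S = S - T0 \<and>
     ((T0 \<notin> D \<and> T = T0 \<and> U = S - T0) \<or> (T0 \<in> D \<and> T = insert m T0 \<and> U = S - T0)
      \<or> (T0 \<in> D \<and> T = T0 \<and> U = insert m (S - T0)))"
    if "(T, U) \<in> CC S m D" for T U
    using that unfolding CC_def
    apply (elim UnE imageE)
    subgoal for T0 using assms(1,2) by (intro exI[of _ T0]) auto
    subgoal for T0 using assms(1,2) by (intro exI[of _ T0]) auto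
    subgoal for T0 using assms(1,2) by (intro exI[of _ T0]) auto
    done
  obtain T0 where A: "T0 \<subseteq> S" "T \<inter> S = T0" "U \<inter> S = S - T0"
     "(T0 \<notin> D \<and> T = T0 \<and> U = S - T0) \<or> (T0 \<in> D \<and> T = insert m T0 \<and> U = S - T0)
      \<or> (T0 \<in> D \<and> T = T0 \<and> U = insert m (S - T0))"
    using rep[OF assms(3)] by blast
  obtain T1 where B: "T1 \<subseteq> S" "T' \<inter> S = T1" "U' \<inter> S = S - T1"
     "(T1 \<notin> D \<and> T' = T1 \<and> U' = S - T1) \<or> (T1 \<in> D \<and> T' = insert m T1 \<and> U' = S - T1)
      \<or> (T1 \<in> D \<and> T' = T1 \<and> U' = insert m (S - T1))"
    using rep[OF assms(4)] by blast
  have "T1 \<subseteq> T0" using A(2) B(2) assms(5) by blast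
  moreover have "T0 \<subseteq> T1" using A(2) B(3) assms(6) A(1) by blast
  ultimately have e: "T0 = T1" by blast
  show ?thesis using A(4) B(4) assms(1,5,6) A(1) unfolding e by auto
qed

lemma constr:
  fixes S :: "'n::finite set"
  assumes m: "m \<notin> S" and D: "D \<subseteq> Pow S" "D \<noteq> {}"
  shows "\<exists>P :: (real ^ 'n) set. polyhedron P \<and> maximal_lattice_free P \<and>
           finite {F. F facet_of P} \<and> card {F. F facet_of P} = card (CC S m D)"
proof (rule gen_main[where a="\<lambda>(T,U). Av T U" and b="\<lambda>(T,U). real (card T)"
      and z = "\<lambda>(T,U). Zv T" and p = "\<chi> k. 1/2"])
  show "finite (CC S m D)" by simp
next
  fix c assume c: "c \<in> CC S m D"
  obtain T U where cTU: "c = (T, U)" by (cases c)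
  have dj: "T \<inter> U = {}" using CC_disj[OF m D(1)] c cTU by simp
  then have "U \<inter> T = {}" by blast
  then show "(case c of (T, U) \<Rightarrow> Av T U) \<bullet> (case c of (T, U) \<Rightarrow> Zv T) = (case c of (T, U) \<Rightarrow> real (card T))"
    unfolding cTU using inner_Av[OF dj] by (simp add: sum_Zv)
next
  fix c d assume c: "c \<in> CC S m D" and d: "d \<in> CC S m D" and ne: "d \<noteq> c"
  obtain T U where cTU: "c = (T, U)" by (cases c)
  obtain T' U' where dTU: "d = (T', U')" by (cases d)
  have dj: "T' \<inter> U' = {}" using CC_disj[OF m D(1)] d dTU by simp
  have val: "Av T' U' \<bullet> Zv T = real (card (T' \<inter> T)) - real (card (U' \<inter> T))"
    using inner_Av[OF dj] by (simp add: sum_Zv)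
  have "real (card (T' \<inter> T)) - real (card (U' \<inter> T)) < real (card T')"
  proof (rule ccontr)
    assume "\<not> ?thesis"
    moreover have "card (T' \<inter> T) \<le> card T'" by (simp add: card_mono)
    ultimately have h1: "card (T' \<inter> T) = card T'" and h2: "card (U' \<inter> T) = 0" by linarith+
    from h1 have "T' \<inter> T = T'" by (metis Int_lower1 card_subset_eq finite)
    then have "T' \<subseteq> T" by blast
    moreover from h2 have "U' \<inter> T = {}" by simp
    ultimately have "(T, U) = (T', U')" using CC_struct[OF m D(1)] c d cTU dTU by blast
    then show False using ne cTU dTU by simp
  qed
  then show "(case d of (T, U) \<Rightarrow> Av T U) \<bullet> (case c of (T, U) \<Rightarrow> Zv T) < (case d of (T, U) \<Rightarrow> real (card T))"
    unfolding cTU dTU using val by simp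
next
  fix c assume c: "c \<in> CC S m D"
  obtain T U where cTU: "c = (T, U)" by (cases c)
  show "(case c of (T, U) \<Rightarrow> Zv T) \<in> integer_points" unfolding cTU by (simp add: Zv_int)
next
  fix c assume c: "c \<in> CC S m D"
  obtain T U where cTU: "c = (T, U)" by (cases c)
  have dj: "T \<inter> U = {}" using CC_disj[OF m D(1)] c cTU by simp
  have ne: "T \<union> U \<noteq> {}" using CC_ne[OF m D] c cTU by simp
  then have pos: "card T + card U > 0" by (simp add: card_gt_0_iff)
  have "Av T U \<bullet> (\<chi> k. 1/2) = real (card T) / 2 - real (card U) / 2"
    using inner_Av[OF dj] by simp
  also have "\<dots> < real (card T)" using pos by linarith
  finally show "(case c of (T, U) \<Rightarrow> Av T U) \<bullet> (\<chi> k. 1/2) < (case c of (T, U) \<Rightarrow> real (card T))"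
    unfolding cTU by simp
next
  fix x :: "real ^ 'n" assume x: "x \<in> integer_points"
  have xi: "x $ k \<in> \<int>" for k using x unfolding integer_points_def by auto
  define T0 where "T0 = {k \<in> S. x $ k \<ge> 1}"
  have T0S: "T0 \<subseteq> S" unfolding T0_def by auto
  have s1: "(\<Sum>k\<in>T0. x $ k) \<ge> real (card T0)"
  proof -
    have "(\<Sum>k\<in>T0. x $ k) \<ge> (\<Sum>k\<in>T0. 1)" by (rule sum_mono) (simp add: T0_def)
    then show ?thesis by simp
  qed
  have s2: "(\<Sum>k\<in>S - T0. x $ k) \<le> 0"
    by (rule sum_nonpos) (auto simp: T0_def intro: int_le0[OF xi])
  have mT0: "m \<notin> T0" using m T0S by blast
  show "\<exists>c\<in>CC S m D. (case c of (T, U) \<Rightarrow> real (card T)) \<le> (case c of (T, U) \<Rightarrow> Av T U) \<bullet> x"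
  proof (cases "T0 \<in> D")
    case False
    have "(T0, S - T0) \<in> CC S m D" unfolding CC_def using False T0S by auto
    moreover have "Av T0 (S - T0) \<bullet> x = (\<Sum>k\<in>T0. x $ k) - (\<Sum>k\<in>S - T0. x $ k)"
      by (rule inner_Av) blast
    ultimately show ?thesis using s1 s2 by (intro bexI[of _ "(T0, S - T0)"]) auto
  next
    case True
    show ?thesis
    proof (cases "x $ m \<ge> 1")
      case True2: True
      have "(insert m T0, S - T0) \<in> CC S m D" unfolding CC_def using True by auto
      moreover have "Av (insert m T0) (S - T0) \<bullet> x = (\<Sum>k\<in>insert m T0. x $ k) - (\<Sum>k\<in>S - T0. x $ k)"
        by (rule inner_Av) (use m in blast)
      moreover have "(\<Sum>k\<in>insert m T0. x $ k) = x $ m + (\<Sum>k\<in>T0. x $ k)" using mT0 by simp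
      moreover have "card (insert m T0) = card T0 + 1" using mT0 by simp
      ultimately show ?thesis using s1 s2 True2 by (intro bexI[of _ "(insert m T0, S - T0)"]) auto
    next
      case False2: False
      have xm: "x $ m \<le> 0" using int_le0[OF xi False2] .
      have "(T0, insert m (S - T0)) \<in> CC S m D" unfolding CC_def using True by auto
      moreover have "Av T0 (insert m (S - T0)) \<bullet> x = (\<Sum>k\<in>T0. x $ k) - (\<Sum>k\<in>insert m (S - T0). x $ k)"
        by (rule inner_Av) (use mT0 in blast)
      moreover have "(\<Sum>k\<in>insert m (S - T0). x $ k) = x $ m + (\<Sum>k\<in>S - T0. x $ k)" using m by simp
      ultimately show ?thesis using s1 s2 xm by (intro bexI[of _ "(T0, insert m (S - T0))"]) auto
    qed
  qed
qed

lemma card_CC: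
  fixes S :: "'n::finite set"
  assumes m: "m \<notin> S" and D: "D \<subseteq> Pow S"
  shows "card (CC S m D) = (2 ^ card S - card D) + 2 * card D"
proof -
  define A1 where "A1 = (\<lambda>T. (T, S - T)) ` (Pow S - D)"
  define A2 where "A2 = (\<lambda>T. (insert m T, S - T)) ` D"
  define A3 where "A3 = (\<lambda>T. (T, insert m (S - T))) ` D"
  have c1: "card A1 = 2 ^ card S - card D"
  proof -
    have "inj_on (\<lambda>T. (T, S - T)) (Pow S - D)" by (rule inj_onI) simp
    then have "card A1 = card (Pow S - D)" unfolding A1_def by (rule card_image)
    also have "\<dots> = card (Pow S) - card D" using D by (simp add: card_Diff_subset finite_subset)
    finally show ?thesis by (simp add: card_Pow)
  qed
  have c2: "card A2 = card D"
  proof -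
    have "inj_on (\<lambda>T. (insert m T, S - T)) D"
    proof (rule inj_onI)
      fix X Y assume "X \<in> D" "Y \<in> D" "(insert m X, S - X) = (insert m Y, S - Y)"
      then show "X = Y" using D by blast
    qed
    then show ?thesis unfolding A2_def by (rule card_image)
  qed
  have c3: "card A3 = card D"
  proof -
    have "inj_on (\<lambda>T. (T, insert m (S - T))) D" by (rule inj_onI) simp
    then show ?thesis unfolding A3_def by (rule card_image)
  qed
  have d12: "A1 \<inter> A2 = {}" unfolding A1_def A2_def using m by auto
  have d3: "(A1 \<union> A2) \<inter> A3 = {}" unfolding A1_def A2_def A3_def using m D by auto
  have "card (CC S m D) = card (A1 \<union> A2 \<union> A3)" unfolding CC_def A1_def A2_def A3_def by simp
  also have "\<dots> = card (A1 \<union> A2) + card A3" by (rule card_Un_disjoint) (simp_all add: d3)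
  also have "card (A1 \<union> A2) = card A1 + card A2" by (rule card_Un_disjoint) (simp_all add: d12)
  finally show ?thesis using c1 c2 c3 by simp
qed

lemma exists_log: "2 \<le> (i::nat) \<Longrightarrow> \<exists>s. 2 ^ s < i \<and> i \<le> 2 ^ (s + 1)"
proof (induction i rule: dec_induct)
  case base
  then show ?case by (intro exI[of _ 0]) simp
next
  case (step i)
  then obtain s where s: "2 ^ s < i" "i \<le> 2 ^ (s + 1)" by blast
  show ?case
  proof (cases "i + 1 \<le> 2 ^ (s + 1)")
    case True then show ?thesis using s by (intro exI[of _ s]) simp
  next
    case False
    then have "i = 2 ^ (s + 1)" using s by simp
    then show ?thesis by (intro exI[of _ "s + 1"]) simp
  qed
qed

theorem lemma3p3:
  fixes i :: nat
  assumes "2 \<le> i" and "i \<le> 2 ^ CARD('n::finite)"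
  shows "\<exists>P :: (real ^ 'n) set. polyhedron P \<and> maximal_lattice_free P \<and>
           finite {F. F facet_of P} \<and> card {F. F facet_of P} = i"
proof -
  obtain s where s: "2 ^ s < i" "i \<le> 2 ^ (s + 1)" using exists_log[OF assms(1)] by blast
  have "(2::nat) ^ s < 2 ^ CARD('n)" using s(1) assms(2) by linarith
  then have sn: "s < CARD('n)" by (simp add: power_strict_increasing_iff)
  obtain R :: "'n set" where R: "card R = s + 1"
    using obtain_subset_with_card_n[of "s + 1" "UNIV :: 'n set"] sn by auto
  obtain m where mR: "m \<in> R" using R by fastforce
  define S where "S = R - {m}"
  have cS: "card S = s" unfolding S_def using R mR by simp
  have mS: "m \<notin> S" unfolding S_def by simp
  define j where "j = i - 2 ^ s"
  have j: "1 \<le> j" "j \<le> card (Pow S)" unfolding j_def using s cS by (auto simp: card_Pow)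
  obtain D where D: "D \<subseteq> Pow S" "card D = j"
    using obtain_subset_with_card_n[OF j(2)] by blast
  have Dne: "D \<noteq> {}" using D j by auto
  have "card (CC S m D) = i"
    using card_CC[OF mS D(1)] D(2) j cS unfolding j_def by (simp add: card_Pow)
  then show ?thesis using constr[OF mS D(1) Dne] by simp
qed

end
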